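(* Let $G$ be a finitely generated group hyperbolic relative to a finite collection $\mathcal P$, $S$ a finite generating set, and $(\epsilon,R,D)$ thin-triangle constants. Let $\mu$ be a positive integer and $U\subset V\cup W$ a finite subset with $|u,u'|_S\le\mu$ for all $u,u'\in U$. Then for every integer $r\ge\mu$, the $r$-hull $U_r$ is $(\mu+2D)$-convex with respect to every $b\in U$.
   Context: $\Gamma$ is the Cayley graph of $G$ w.r.t. $S$, $V=G$, $W$ the set of cosets $gP_\lambda$; relative hyperbolicity means the coned-off Cayley graph (vertex set $V\cup W$, edges of $\Gamma$ plus edges $(v,w)$ for $v\in w$) is fine and $\delta$-hyperbolic. $|\cdot,\cdot|_S$ is extended to $V\cup W$ via distances in $\Gamma$ between corresponding elements/cosets. For a geodesic edge-path $p=(p_j)_{j=0}^\ell$ in $\Gamma$, $p_i$ is $(\epsilon,R)$-deep in $w\in W$ if $R\le i\le\ell-R$ and $|p_j,w|_S\le\epsilon$ for all $|j-i|\le R$. A geodesic from $a$ to $b$ ($a,b\in V\cup W$) is a geodesic in $\Gamma$ of length $|a,b|_S$ starting at $a$ (if $a\in V$) or in $a$ (if $a\in W$), ending analogously at $b$; for $i>\ell$, $p_i:=p_\ell$. Positive integers $(\epsilon,R,D)$ are thin-triangle constants if: $D\ge\epsilon$; no vertex of a geodesic in $\Gamma$ is $(\epsilon,R)$-deep in two distinct cosets; and for all $a,b,c\in V\cup W$ with $a\ne b$, geodesics $p^{ab},p^{bc},p^{ac}$, $\ell=|a,b|_S$, $0\le i\le\ell$, with $z=w$ if $p^{ab}_i$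 is $(\epsilon,R)$-deep in $w$ and $z=p^{ab}_i$ otherwise, we have $|z,p^{ac}_i|_S\le D$ or $|z,p^{bc}_{\ell-i}|_S\le D$. The $r$-hull $U_r$ of finite $U$ is the union of all $v\in V$ with $|v,u|_S\le r$ for every $u\in U$ and all $w\in W$ with $|w,u|_S\le r+\epsilon$ for every $u\in U$. A subset $U'\subset V\cup W$ is $\nu$-convex with respect to $u\in U'$ if for every $u'\in U'$, every geodesic $(p_j)_{j=0}^\ell$ from $u$ to $u'$ in $\Gamma$ and every $j\le\ell-\nu$: $p_j\in U'$, and every $w\in W$ with $|w,p_j|_S\le\epsilon$ lies in $U'$. *)

theory Defs
  imports "HOL-Algebra.Algebra"
begin

definition is_path :: "('v \<Rightarrow> 'v \<Rightarrow> bool) \<Rightarrow> (nat \<Rightarrow> 'v) \<Rightarrow> nat \<Rightarrow> bool" where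
  "is_path E p l \<longleftrightarrow> (\<forall>j<l. E (p j) (p (Suc j)))"

text \<open>Graph (path) distance; the graphs considered are connected.\<close>
definition gdist :: "('v \<Rightarrow> 'v \<Rightarrow> bool) \<Rightarrow> 'v \<Rightarrow> 'v \<Rightarrow> nat" where
  "gdist E x y = Inf {n. \<exists>p. p 0 = x \<and> p n = y \<and> is_path E p n}"

definition is_geodesic :: "('v \<Rightarrow> 'v \<Rightarrow> bool) \<Rightarrow> (nat \<Rightarrow> 'v) \<Rightarrow> nat \<Rightarrow> bool" where
  "is_geodesic E p l \<longleftrightarrow> is_path E p l \<and> l = gdist E (p 0) (p l)"

definition is_circuit :: "('v \<Rightarrow> 'v \<Rightarrow> bool) \<Rightarrow> 'v list \<Rightarrow> bool" where
  "is_circuit E c \<longleftrightarrow> length c \<ge> 3 \<and> distinct c \<and>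
     (\<forall>i<length c. E (c ! i) (c ! ((i + 1) mod length c)))"

definition circuit_has_edge :: "'v list \<Rightarrow> 'v \<Rightarrow> 'v \<Rightarrow> bool" where
  "circuit_has_edge c a b \<longleftrightarrow>
     (\<exists>i<length c. {c ! i, c ! ((i + 1) mod length c)} = {a, b})"

definition fine_graph :: "('v \<Rightarrow> 'v \<Rightarrow> bool) \<Rightarrow> bool" where
  "fine_graph E \<longleftrightarrow> (\<forall>a b n. E a b \<longrightarrow>
     finite {c. is_circuit E c \<and> length c = n \<and> circuit_has_edge c a b})"

definition hyperbolic_graph :: "('v \<Rightarrow> 'v \<Rightarrow> bool) \<Rightarrow> real \<Rightarrow> bool" where
  "hyperbolic_graph E \<delta> \<longleftrightarrow> (\<forall>p1 l1 p2 l2 p3 l3.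
     is_geodesic E p1 l1 \<and> is_geodesic E p2 l2 \<and> is_geodesic E p3 l3 \<and>
     p2 0 = p1 l1 \<and> p3 0 = p2 l2 \<and> p1 0 = p3 l3 \<longrightarrow>
     (\<forall>i\<le>l1. (\<exists>j\<le>l2. real (gdist E (p1 i) (p2 j)) \<le> \<delta>) \<or>
              (\<exists>j\<le>l3. real (gdist E (p1 i) (p3 j)) \<le> \<delta>)))"

definition cay_adj :: "('a, 'b) monoid_scheme \<Rightarrow> 'a set \<Rightarrow> 'a \<Rightarrow> 'a \<Rightarrow> bool" where
  "cay_adj G S g h \<longleftrightarrow> g \<in> carrier G \<and> h \<in> carrier G \<and>
     (\<exists>s\<in>S. h = g \<otimes>\<^bsub>G\<^esub> s \<or> g = h \<otimes>\<^bsub>G\<^esub> s)"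

definition cosets :: "('a, 'b) monoid_scheme \<Rightarrow> 'a set set \<Rightarrow> 'a set set" where
  "cosets G P = {l_coset G g H | g H. g \<in> carrier G \<and> H \<in> P}"

text \<open>V \<union> W, realised as a disjoint sum.\<close>
definition VW :: "('a, 'b) monoid_scheme \<Rightarrow> 'a set set \<Rightarrow> ('a + 'a set) set" where
  "VW G P = Inl ` carrier G \<union> Inr ` cosets G P"

definition cone_adj :: "('a, 'b) monoid_scheme \<Rightarrow> 'a set set \<Rightarrow> 'a set
     \<Rightarrow> ('a + 'a set) \<Rightarrow> ('a + 'a set) \<Rightarrow> bool" where
  "cone_adj G P S x y = (case (x, y) of
      (Inl g, Inl h) \<Rightarrow> cay_adj G S g h
    | (Inl v, Inr w) \<Rightarrow> v \<in> carrier G \<and> w \<in> cosets G P \<and> v \<in> w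
    | (Inr w, Inl v) \<Rightarrow> v \<in> carrier G \<and> w \<in> cosets G P \<and> v \<in> w
    | (Inr _, Inr _) \<Rightarrow> False)"

definition rel_hyperbolic :: "('a, 'b) monoid_scheme \<Rightarrow> 'a set set \<Rightarrow> 'a set \<Rightarrow> bool" where
  "rel_hyperbolic G P S \<longleftrightarrow> finite P \<and> (\<forall>H\<in>P. subgroup H G) \<and>
     fine_graph (cone_adj G P S) \<and> (\<exists>\<delta>\<ge>0. hyperbolic_graph (cone_adj G P S) \<delta>)"

fun toset :: "('a + 'a set) \<Rightarrow> 'a set" where
  "toset (Inl v) = {v}"
| "toset (Inr w) = w"

definition dS :: "('a, 'b) monoid_scheme \<Rightarrow> 'a set \<Rightarrow> ('a + 'a set) \<Rightarrow> ('a + 'a set) \<Rightarrow> nat" where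
  "dS G S x y = Inf {gdist (cay_adj G S) a b | a b. a \<in> toset x \<and> b \<in> toset y}"

definition cay_geodesic :: "('a, 'b) monoid_scheme \<Rightarrow> 'a set \<Rightarrow> (nat \<Rightarrow> 'a) \<Rightarrow> nat \<Rightarrow> bool" where
  "cay_geodesic G S p l \<longleftrightarrow> p 0 \<in> carrier G \<and> is_geodesic (cay_adj G S) p l"

definition geod_from_to :: "('a, 'b) monoid_scheme \<Rightarrow> 'a set \<Rightarrow> ('a + 'a set) \<Rightarrow> ('a + 'a set)
     \<Rightarrow> (nat \<Rightarrow> 'a) \<Rightarrow> bool" where
  "geod_from_to G S a b p \<longleftrightarrow> p 0 \<in> toset a \<and> p (dS G S a b) \<in> toset b \<and>
     is_path (cay_adj G S) p (dS G S a b)"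

definition pt :: "(nat \<Rightarrow> 'a) \<Rightarrow> nat \<Rightarrow> nat \<Rightarrow> 'a" where
  "pt p l i = p (min i l)"

definition deep :: "('a, 'b) monoid_scheme \<Rightarrow> 'a set \<Rightarrow> nat \<Rightarrow> nat \<Rightarrow> (nat \<Rightarrow> 'a) \<Rightarrow> nat
     \<Rightarrow> nat \<Rightarrow> 'a set \<Rightarrow> bool" where
  "deep G S \<epsilon> R p l i w \<longleftrightarrow> R \<le> i \<and> i + R \<le> l \<and>
     (\<forall>j. i \<le> j + R \<and> j \<le> i + R \<longrightarrow> dS G S (Inl (p j)) (Inr w) \<le> \<epsilon>)"

definition thin_triangle_constants :: "('a, 'b) monoid_scheme \<Rightarrow> 'a set set \<Rightarrow> 'a set
     \<Rightarrow> nat \<Rightarrow> nat \<Rightarrow> nat \<Rightarrow> bool" where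
  "thin_triangle_constants G P S \<epsilon> R D \<longleftrightarrow>
     0 < \<epsilon> \<and> 0 < R \<and> 0 < D \<and> \<epsilon> \<le> D \<and>
     (\<forall>p l i w w'. cay_geodesic G S p l \<and> i \<le> l \<and> w \<in> cosets G P \<and> w' \<in> cosets G P \<and>
        deep G S \<epsilon> R p l i w \<and> deep G S \<epsilon> R p l i w' \<longrightarrow> w = w') \<and>
     (\<forall>a\<in>VW G P. \<forall>b\<in>VW G P. \<forall>c\<in>VW G P. \<forall>pab pbc pac. a \<noteq> b \<and>
        geod_from_to G S a b pab \<and> geod_from_to G S b c pbc \<and> geod_from_to G S a c pac \<longrightarrow>
        (\<forall>i\<le>dS G S a b.
          (\<forall>z. ((\<exists>w\<in>cosets G P. deep G S \<epsilon> R pab (dS G S a b) i w \<and> z = Inr w) \<or>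
                ((\<nexists>w. w \<in> cosets G P \<and> deep G S \<epsilon> R pab (dS G S a b) i w) \<and> z = Inl (pab i)))
             \<longrightarrow> dS G S z (Inl (pt pac (dS G S a c) i)) \<le> D \<or>
                 dS G S z (Inl (pt pbc (dS G S b c) (dS G S a b - i))) \<le> D)))"

definition r_hull :: "('a, 'b) monoid_scheme \<Rightarrow> 'a set set \<Rightarrow> 'a set \<Rightarrow> nat
     \<Rightarrow> ('a + 'a set) set \<Rightarrow> nat \<Rightarrow> ('a + 'a set) set" where
  "r_hull G P S \<epsilon> U r =
     {Inl v | v. v \<in> carrier G \<and> (\<forall>u\<in>U. dS G S (Inl v) u \<le> r)} \<union>
     {Inr w | w. w \<in> cosets G P \<and> (\<forall>u\<in>U. dS G S (Inr w) u \<le> r + \<epsilon>)}"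

definition convex_wrt :: "('a, 'b) monoid_scheme \<Rightarrow> 'a set set \<Rightarrow> 'a set \<Rightarrow> nat \<Rightarrow> nat
     \<Rightarrow> ('a + 'a set) set \<Rightarrow> ('a + 'a set) \<Rightarrow> bool" where
  "convex_wrt G P S \<epsilon> \<nu> U' u \<longleftrightarrow> u \<in> U' \<and>
     (\<forall>u'\<in>U'. \<forall>p. geod_from_to G S u u' p \<longrightarrow>
        (\<forall>j. j + \<nu> \<le> dS G S u u' \<longrightarrow>
           Inl (p j) \<in> U' \<and>
           (\<forall>w\<in>cosets G P. dS G S (Inr w) (Inl (p j)) \<le> \<epsilon> \<longrightarrow> Inr w \<in> U')))"

end

theory Submission
  imports Defs
begin

lemma nat_Inf_le: "(x::nat) \<in> A \<Longrightarrow> Inf A \<le> x"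
  unfolding Inf_nat_def by (rule Least_le)
lemma nat_Inf_mem: "(A::nat set) \<noteq> {} \<Longrightarrow> Inf A \<in> A"
  by (rule Inf_nat_def1)

lemma cay_sym: "cay_adj G S x y = cay_adj G S y x"
  unfolding cay_adj_def by blast

lemma gdist_le: "p 0 = x \<Longrightarrow> p n = y \<Longrightarrow> is_path E p n \<Longrightarrow> gdist E x y \<le> n"
  unfolding gdist_def by (rule nat_Inf_le) blast

lemma gdist_attained:
  assumes "p 0 = x" "p n = y" "is_path E p n"
  shows "\<exists>q. q 0 = x \<and> q (gdist E x y) = y \<and> is_path E q (gdist E x y)"
proof -
  have "{n. \<exists>p. p 0 = x \<and> p n = y \<and> is_path E p n} \<noteq> {}" using assms by blast
  from nat_Inf_mem[OF this] show ?thesis unfolding gdist_def by blast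
qed

lemma path_concat:
  assumes "is_path E p m" "is_path E q n" "p m = q 0"
  shows "is_path E (\<lambda>i. if i \<le> m then p i else q (i - m)) (m + n)"
  unfolding is_path_def
proof (intro allI impI)
  fix j assume j: "j < m + n"
  show "E (if j \<le> m then p j else q (j - m)) (if Suc j \<le> m then p (Suc j) else q (Suc j - m))"
  proof (cases "Suc j \<le> m")
    case True then show ?thesis using assms(1) unfolding is_path_def by auto
  next
    case False
    show ?thesis
    proof (cases "j = m")
      case True
      then show ?thesis using assms(2,3) j False unfolding is_path_def by auto
    next
      case False2: False
      then have "j - m < n" "Suc j - m = Suc (j - m)" using j False by auto
      then show ?thesis using assms(2) False False2 unfolding is_path_def by auto
    qed
  qed
qed

lemma path_shift:
  assumes "is_path E p n" "i \<le> k" "k \<le> n"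
  shows "is_path E (\<lambda>t. p (i + t)) (k - i)"
  using assms unfolding is_path_def by auto

lemma gdist_sub: "is_path E p n \<Longrightarrow> i \<le> k \<Longrightarrow> k \<le> n \<Longrightarrow> gdist E (p i) (p k) \<le> k - i"
  by (rule gdist_le[OF _ _ path_shift]) auto

lemma path_rev:
  assumes "\<And>x y. E x y = E y x" "is_path E p n"
  shows "is_path E (\<lambda>t. p (n - t)) n"
  unfolding is_path_def
proof (intro allI impI)
  fix j assume "j < n"
  then have "E (p (n - Suc j)) (p (Suc (n - Suc j)))" using assms(2) unfolding is_path_def by auto
  moreover have "Suc (n - Suc j) = n - j" using \<open>j < n\<close> by auto
  ultimately show "E (p (n - j)) (p (n - Suc j))" using assms(1) by metis
qed

lemma gdist_sym:
  assumes "\<And>x y. E x y = E y x"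
  shows "gdist E x y = gdist E y x"
proof -
  have "{n. \<exists>p. p 0 = x \<and> p n = y \<and> is_path E p n} = {n. \<exists>p. p 0 = y \<and> p n = x \<and> is_path E p n}"
  proof -
    have *: "\<exists>q. q 0 = b \<and> q n = a \<and> is_path E q n" if "p 0 = a" "p n = b" "is_path E p n" for a b p n
      using path_rev[OF assms that(3)] that by (intro exI[of _ "\<lambda>t. p (n - t)"]) auto
    show ?thesis using * by blast
  qed
  then show ?thesis unfolding gdist_def by simp
qed

lemma path_carrier:
  assumes "p 0 \<in> carrier G" "is_path (cay_adj G S) p n" "i \<le> n"
  shows "p i \<in> carrier G"
proof (cases i)
  case 0 then show ?thesis using assms by simp
next
  case (Suc k)
  then show ?thesis using assms unfolding is_path_def cay_adj_def by auto
qed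

lemma connect_gen:
  assumes "group G" "S \<subseteq> carrier G" "h \<in> generate G S"
  shows "\<forall>x\<in>carrier G. \<exists>p n. p 0 = x \<and> p n = x \<otimes>\<^bsub>G\<^esub> h \<and> is_path (cay_adj G S) p n"
  using assms(3)
proof induction
  case one
  show ?case using assms(1) by (auto intro!: exI[of _ 0] simp: is_path_def group.is_monoid monoid.r_one)
next
  case (incl s)
  show ?case
  proof
    fix x assume x: "x \<in> carrier G"
    have "cay_adj G S x (x \<otimes>\<^bsub>G\<^esub> s)" unfolding cay_adj_def using x incl assms
      by (auto intro: monoid.m_closed group.is_monoid)
    then show "\<exists>p n. p 0 = x \<and> p n = x \<otimes>\<^bsub>G\<^esub> s \<and> is_path (cay_adj G S) p n"
      by (intro exI[of _ "\<lambda>i. if i = 0 then x else x \<otimes>\<^bsub>G\<^esub> s"] exI[of _ 1]) (auto simp: is_path_def)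
  qed
next
  case (inv s)
  show ?case
  proof
    fix x assume x: "x \<in> carrier G"
    have s: "s \<in> carrier G" using inv assms by auto
    have y: "x \<otimes>\<^bsub>G\<^esub> inv\<^bsub>G\<^esub> s \<in> carrier G" using x s assms(1) by (simp add: group.subgroup_self subgroup.m_inv_closed group.is_monoid monoid.m_closed)
    have "x = (x \<otimes>\<^bsub>G\<^esub> inv\<^bsub>G\<^esub> s) \<otimes>\<^bsub>G\<^esub> s" using x s assms(1)
      by (simp add: group.is_monoid monoid.m_assoc group.l_inv monoid.r_one group.inv_closed)
    then have "cay_adj G S x (x \<otimes>\<^bsub>G\<^esub> inv\<^bsub>G\<^esub> s)" unfolding cay_adj_def using x y inv by blast
    then show "\<exists>p n. p 0 = x \<and> p n = x \<otimes>\<^bsub>G\<^esub> inv\<^bsub>G\<^esub> s \<and> is_path (cay_adj G S) p n"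
      by (intro exI[of _ "\<lambda>i. if i = 0 then x else x \<otimes>\<^bsub>G\<^esub> inv\<^bsub>G\<^esub> s"] exI[of _ 1]) (auto simp: is_path_def)
  qed
next
  case (eng h1 h2)
  show ?case
  proof
    fix x assume x: "x \<in> carrier G"
    have gc: "generate G S \<subseteq> carrier G" using assms by (simp add: group.generate_incl)
    have h1: "h1 \<in> carrier G" and h2: "h2 \<in> carrier G" using eng gc by auto
    obtain p m where p: "p 0 = x" "p m = x \<otimes>\<^bsub>G\<^esub> h1" "is_path (cay_adj G S) p m" using eng.IH(1) x by blast
    have xh: "x \<otimes>\<^bsub>G\<^esub> h1 \<in> carrier G" using x h1 assms(1) by (simp add: group.is_monoid monoid.m_closed)
    obtain q n where q: "q 0 = x \<otimes>\<^bsub>G\<^esub> h1" "q n = (x \<otimes>\<^bsub>G\<^esub> h1) \<otimes>\<^bsub>G\<^esub> h2" "is_path (cay_adj G S) q n"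
      using eng.IH(2) xh by blast
    have "(x \<otimes>\<^bsub>G\<^esub> h1) \<otimes>\<^bsub>G\<^esub> h2 = x \<otimes>\<^bsub>G\<^esub> (h1 \<otimes>\<^bsub>G\<^esub> h2)"
      using x h1 h2 assms(1) by (simp add: group.is_monoid monoid.m_assoc)
    then show "\<exists>p n. p 0 = x \<and> p n = x \<otimes>\<^bsub>G\<^esub> (h1 \<otimes>\<^bsub>G\<^esub> h2) \<and> is_path (cay_adj G S) p n"
      using path_concat[OF p(3) q(3)] p q
      by (intro exI[of _ "\<lambda>i. if i \<le> m then p i else q (i - m)"] exI[of _ "m+n"]) (auto simp: p(1))
  qed
qed


definition "cgood G S \<longleftrightarrow> group G \<and> S \<subseteq> carrier G \<and> generate G S = carrier G"

lemma connect:
  assumes "cgood G S" "x \<in> carrier G" "y \<in> carrier G"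
  shows "\<exists>p n. p 0 = x \<and> p n = y \<and> is_path (cay_adj G S) p n"
proof -
  have g: "group G" using assms unfolding cgood_def by auto
  let ?h = "inv\<^bsub>G\<^esub> x \<otimes>\<^bsub>G\<^esub> y"
  have "?h \<in> generate G S" using assms g unfolding cgood_def by (auto simp: group.inv_closed group.is_monoid monoid.m_closed)
  moreover have "x \<otimes>\<^bsub>G\<^esub> ?h = y" using assms g
    by (simp add: group.is_monoid monoid.m_assoc[symmetric] group.r_inv monoid.l_one group.inv_closed)
  ultimately show ?thesis using connect_gen[of G S ?h] assms g unfolding cgood_def by metis
qed

lemma gdist_path:
  assumes "cgood G S" "x \<in> carrier G" "y \<in> carrier G"
  shows "\<exists>q. q 0 = x \<and> q (gdist (cay_adj G S) x y) = y \<and> is_path (cay_adj G S) q (gdist (cay_adj G S) x y)"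
  using connect[OF assms] gdist_attained by metis

lemma gdist_tri:
  assumes "cgood G S" "x \<in> carrier G" "y \<in> carrier G" "z \<in> carrier G"
  shows "gdist (cay_adj G S) x z \<le> gdist (cay_adj G S) x y + gdist (cay_adj G S) y z"
proof -
  obtain p where p: "p 0 = x" "p (gdist (cay_adj G S) x y) = y" "is_path (cay_adj G S) p (gdist (cay_adj G S) x y)"
    using gdist_path[OF assms(1,2,3)] by blast
  obtain q where q: "q 0 = y" "q (gdist (cay_adj G S) y z) = z" "is_path (cay_adj G S) q (gdist (cay_adj G S) y z)"
    using gdist_path[OF assms(1,3,4)] by blast
  show ?thesis
    by (rule gdist_le[OF _ _ path_concat[OF p(3) q(3)]]) (use p q in auto)
qed

lemma dS_le: "a \<in> toset x \<Longrightarrow> c \<in> toset y \<Longrightarrow> dS G S x y \<le> gdist (cay_adj G S) a c"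
  unfolding dS_def by (rule nat_Inf_le) blast

lemma dS_att: "toset x \<noteq> {} \<Longrightarrow> toset y \<noteq> {} \<Longrightarrow> \<exists>a\<in>toset x. \<exists>c\<in>toset y. dS G S x y = gdist (cay_adj G S) a c"
proof -
  assume "toset x \<noteq> {}" "toset y \<noteq> {}"
  then have "{gdist (cay_adj G S) a b |a b. a \<in> toset x \<and> b \<in> toset y} \<noteq> {}" by blast
  from nat_Inf_mem[OF this] show ?thesis unfolding dS_def by blast
qed

lemma dS_sym: "dS G S x y = dS G S y x"
proof -
  have "{gdist (cay_adj G S) a b |a b. a \<in> toset x \<and> b \<in> toset y} = {gdist (cay_adj G S) a b |a b. a \<in> toset y \<and> b \<in> toset x}"
    using gdist_sym[of "cay_adj G S", OF cay_sym] by blast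
  then show ?thesis unfolding dS_def by simp
qed

lemma dS_Inl: "dS G S (Inl a) (Inl c) = gdist (cay_adj G S) a c"
  unfolding dS_def by simp

lemma dS_self: "a \<in> toset x \<Longrightarrow> dS G S x x = 0"
proof -
  assume a: "a \<in> toset x"
  have "gdist (cay_adj G S) a a \<le> 0" by (rule gdist_le[of "\<lambda>_. a"]) (auto simp: is_path_def)
  then show ?thesis using dS_le[OF a a, of G S] by simp
qed

lemma dS_tri:
  assumes "cgood G S" "x \<in> carrier G" "y \<in> carrier G" "toset u \<noteq> {}" "toset u \<subseteq> carrier G"
  shows "dS G S (Inl x) u \<le> gdist (cay_adj G S) x y + dS G S (Inl y) u"
proof -
  obtain a c where ac: "a \<in> toset (Inl y)" "c \<in> toset u" "dS G S (Inl y) u = gdist (cay_adj G S) a c"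
    using dS_att[of "Inl y" u G S] assms by auto
  have "dS G S (Inl x) u \<le> gdist (cay_adj G S) x c" using dS_le[of x "Inl x" c u] ac by simp
  also have "\<dots> \<le> gdist (cay_adj G S) x y + gdist (cay_adj G S) y c"
    using gdist_tri[OF assms(1,2,3)] ac assms by auto
  finally show ?thesis using ac by simp
qed

lemma geod_exists:
  assumes "cgood G S" "toset x \<noteq> {}" "toset y \<noteq> {}" "toset x \<subseteq> carrier G" "toset y \<subseteq> carrier G"
  shows "\<exists>p. geod_from_to G S x y p"
proof -
  obtain a c where ac: "a \<in> toset x" "c \<in> toset y" "dS G S x y = gdist (cay_adj G S) a c"
    using dS_att[OF assms(2,3)] by blast
  obtain q where "q 0 = a \<and> q (gdist (cay_adj G S) a c) = c \<and> is_path (cay_adj G S) q (gdist (cay_adj G S) a c)"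
    using gdist_path[OF assms(1), of a c] ac assms by blast
  then show ?thesis unfolding geod_from_to_def using ac by metis
qed

lemma toset_VW:
  assumes "group G" "\<forall>H\<in>P. subgroup H G" "x \<in> VW G P"
  shows "toset x \<noteq> {} \<and> toset x \<subseteq> carrier G"
proof (cases x)
  case (Inl v) then show ?thesis using assms unfolding VW_def by auto
next
  case (Inr w)
  then obtain g H where w: "w = l_coset G g H" "g \<in> carrier G" "H \<in> P"
    using assms unfolding VW_def cosets_def by auto
  have sH: "subgroup H G" using assms w by auto
  have "g \<otimes>\<^bsub>G\<^esub> \<one>\<^bsub>G\<^esub> \<in> w" unfolding w l_coset_def using sH subgroup.one_closed by blast
  moreover have "w \<subseteq> carrier G" unfolding w using group.l_coset_subset_G[OF assms(1)] sH w subgroup.subset by blast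
  ultimately show ?thesis using Inr by auto
qed


theorem lemma3p10:
  fixes G :: "('a, 'b) monoid_scheme" and P :: "'a set set" and S :: "'a set"
    and \<epsilon> R D \<mu> r :: nat and U :: "('a + 'a set) set"
  assumes "group G"
    and "S \<subseteq> carrier G" and "finite S" and "generate G S = carrier G"
    and "rel_hyperbolic G P S"
    and "thin_triangle_constants G P S \<epsilon> R D"
    and "0 < \<mu>"
    and "finite U" and "U \<subseteq> VW G P"
    and "\<forall>u\<in>U. \<forall>u'\<in>U. dS G S u u' \<le> \<mu>"
    and "\<mu> \<le> r"
  shows "\<forall>b\<in>U. convex_wrt G P S \<epsilon> (\<mu> + 2 * D) (r_hull G P S \<epsilon> U r) b"
proof
  fix b assume bU: "b \<in> U"
  have cg: "cgood G S" unfolding cgood_def using assms by auto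
  have sub: "\<forall>H\<in>P. subgroup H G" using assms(5) unfolding rel_hyperbolic_def by auto
  have TV: "\<And>x. x \<in> VW G P \<Longrightarrow> toset x \<noteq> {} \<and> toset x \<subseteq> carrier G"
    using toset_VW[OF assms(1) sub] by blast
  have R0: "0 < R" and eD: "\<epsilon> \<le> D" using assms(6) unfolding thin_triangle_constants_def by auto
  have tri: "\<forall>a\<in>VW G P. \<forall>b\<in>VW G P. \<forall>c\<in>VW G P. \<forall>pab pbc pac. a \<noteq> b \<and>
        geod_from_to G S a b pab \<and> geod_from_to G S b c pbc \<and> geod_from_to G S a c pac \<longrightarrow>
        (\<forall>i\<le>dS G S a b.
          (\<forall>z. ((\<exists>w\<in>cosets G P. deep G S \<epsilon> R pab (dS G S a b) i w \<and> z = Inr w) \<or>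
                ((\<nexists>w. w \<in> cosets G P \<and> deep G S \<epsilon> R pab (dS G S a b) i w) \<and> z = Inl (pab i)))
             \<longrightarrow> dS G S z (Inl (pt pac (dS G S a c) i)) \<le> D \<or>
                 dS G S z (Inl (pt pbc (dS G S b c) (dS G S a b - i))) \<le> D))"
    using assms(6) unfolding thin_triangle_constants_def by (elim conjE) assumption
  let ?H = "r_hull G P S \<epsilon> U r"
  have HVW: "?H \<subseteq> VW G P" unfolding r_hull_def VW_def by auto
  have bVW: "b \<in> VW G P" using bU assms(9) by auto
  have bH: "b \<in> ?H"
  proof -
    have d: "\<forall>u\<in>U. dS G S b u \<le> r" using bU assms(10,11) by (meson le_trans)
    show ?thesis
    proof (cases b)
      case (Inl v)
      then show ?thesis using bVW d unfolding r_hull_def VW_def by auto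
    next
      case (Inr w)
      then show ?thesis using bVW d unfolding r_hull_def VW_def by (auto intro: trans_le_add1)
    qed
  qed
  show "convex_wrt G P S \<epsilon> (\<mu> + 2 * D) ?H b"
    unfolding convex_wrt_def
  proof (intro conjI ballI allI impI bH)
    fix u' p j
    assume u'H: "u' \<in> ?H" and gp: "geod_from_to G S b u' p" and j: "j + (\<mu> + 2 * D) \<le> dS G S b u'"
    define l where "l = dS G S b u'"
    have u'VW: "u' \<in> VW G P" using u'H HVW by auto
    have lbound: "l \<le> r + \<epsilon>"
    proof (cases u')
      case (Inl v)
      then have "dS G S (Inl v) b \<le> r" using u'H bU unfolding r_hull_def by auto
      then show ?thesis unfolding l_def using Inl dS_sym[of G S b u'] by simp
    next
      case (Inr w)
      then have "dS G S (Inr w) b \<le> r + \<epsilon>" using u'H bU unfolding r_hull_def by auto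
      then show ?thesis unfolding l_def using Inr dS_sym[of G S b u'] by simp
    qed
    have p0: "p 0 \<in> toset b" and pl: "p l \<in> toset u'" and pp: "is_path (cay_adj G S) p l"
      using gp unfolding geod_from_to_def l_def by auto
    have p0c: "p 0 \<in> carrier G" using p0 TV[OF bVW] by auto
    have pc: "\<And>i. i \<le> l \<Longrightarrow> p i \<in> carrier G" using path_carrier[OF p0c pp] by blast
    have jl: "j \<le> l" using j l_def by simp
    have pjc: "p j \<in> carrier G" using pc jl by simp
    have bne: "b \<noteq> u'"
    proof
      assume "b = u'"
      then have "l = 0" unfolding l_def using dS_self p0 by metis
      then show False using j l_def assms(7) by simp
    qed
    have key: "dS G S (Inl (p j)) u \<le> r" if uU: "u \<in> U" for u
    proof -
      have uVW: "u \<in> VW G P" using uU assms(9) by auto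
      obtain pbc where pbc: "geod_from_to G S u' u pbc" using geod_exists[OF cg] TV[OF u'VW] TV[OF uVW] by blast
      obtain pac where pac: "geod_from_to G S b u pac" using geod_exists[OF cg] TV[OF bVW] TV[OF uVW] by blast
      define lac where "lac = dS G S b u"
      define lbc where "lbc = dS G S u' u"
      have lac: "lac \<le> \<mu>" using assms(10) bU uU lac_def by auto
      have lbc: "lbc \<le> r + \<epsilon>"
      proof (cases u')
        case (Inl v)
        then show ?thesis using u'H uU unfolding r_hull_def lbc_def by auto
      next
        case (Inr w)
        then show ?thesis using u'H uU unfolding r_hull_def lbc_def by auto
      qed
      have nodeep: "\<nexists>w. w \<in> cosets G P \<and> deep G S \<epsilon> R p l 0 w" using R0 unfolding deep_def by auto
      have T: "dS G S (Inl (p 0)) (Inl (pt pac lac 0)) \<le> D \<or>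
                 dS G S (Inl (p 0)) (Inl (pt pbc lbc (l - 0))) \<le> D"
        using tri[rule_format, OF bVW u'VW uVW conjI[OF bne conjI[OF gp conjI[OF pbc pac]]] le0, of "Inl (p 0)"]
          nodeep unfolding l_def lac_def lbc_def by simp
      have pac0: "pac 0 \<in> toset b" and pacl: "pac lac \<in> toset u" and ppac: "is_path (cay_adj G S) pac lac"
        using pac unfolding geod_from_to_def lac_def by auto
      have pbc0: "pbc 0 \<in> toset u'" and pbcl: "pbc lbc \<in> toset u" and ppbc: "is_path (cay_adj G S) pbc lbc"
        using pbc unfolding geod_from_to_def lbc_def by auto
      have pacc: "pac 0 \<in> carrier G" using pac0 TV[OF bVW] by auto
      have pbcc: "pbc 0 \<in> carrier G" using pbc0 TV[OF u'VW] by auto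
      have s1: "dS G S (Inl (p j)) u \<le> j + dS G S (Inl (p 0)) u"
      proof -
        have "dS G S (Inl (p j)) u \<le> gdist (cay_adj G S) (p j) (p 0) + dS G S (Inl (p 0)) u"
          using dS_tri[OF cg pjc p0c] TV[OF uVW] by auto
        moreover have "gdist (cay_adj G S) (p j) (p 0) \<le> j"
          using gdist_sub[OF pp, of 0 j] jl gdist_sym[of "cay_adj G S", OF cay_sym] by simp
        ultimately show ?thesis by simp
      qed
      have endb: "dS G S (Inl (q m)) u \<le> n - m" if "q 0 \<in> carrier G" "is_path (cay_adj G S) q n" "q n \<in> toset u" "m \<le> n"
        for q m n
      proof -
        have "dS G S (Inl (q m)) u \<le> gdist (cay_adj G S) (q m) (q n)" using dS_le[of "q m" "Inl (q m)" "q n" u] that by simp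
        also have "\<dots> \<le> n - m" using gdist_sub[OF that(2), of m n] that by simp
        finally show ?thesis .
      qed
      show ?thesis
      proof (cases "dS G S (Inl (p 0)) (Inl (pt pac lac 0)) \<le> D")
        case True
        have "dS G S (Inl (p 0)) u \<le> gdist (cay_adj G S) (p 0) (pac 0) + dS G S (Inl (pac 0)) u"
          using dS_tri[OF cg p0c pacc] TV[OF uVW] by auto
        moreover have "gdist (cay_adj G S) (p 0) (pac 0) \<le> D" using True by (simp add: dS_Inl pt_def)
        moreover have "dS G S (Inl (pac 0)) u \<le> lac" using endb[OF pacc ppac pacl, of 0] by simp
        ultimately have "dS G S (Inl (p 0)) u \<le> D + \<mu>" using lac by linarith
        then show ?thesis using s1 j lbound eD unfolding l_def[symmetric] by linarith
      next
        case False
        then have F: "gdist (cay_adj G S) (p 0) (pbc (min l lbc)) \<le> D" using T by (simp add: dS_Inl pt_def)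
        have mc: "pbc (min l lbc) \<in> carrier G" using path_carrier[OF pbcc ppbc, of "min l lbc"] by simp
        have "dS G S (Inl (p 0)) u \<le> gdist (cay_adj G S) (p 0) (pbc (min l lbc)) + dS G S (Inl (pbc (min l lbc))) u"
          using dS_tri[OF cg p0c mc] TV[OF uVW] by auto
        moreover have "dS G S (Inl (pbc (min l lbc))) u \<le> lbc - min l lbc" using endb[OF pbcc ppbc pbcl, of "min l lbc"] by simp
        ultimately have "dS G S (Inl (p 0)) u \<le> D + (lbc - min l lbc)" using F by linarith
        then show ?thesis using s1 j lbound lbc eD unfolding l_def[symmetric] by linarith
      qed
    qed
    show "Inl (p j) \<in> ?H" unfolding r_hull_def using pjc key by auto
    fix w assume wc: "w \<in> cosets G P" and wd: "dS G S (Inr w) (Inl (p j)) \<le> \<epsilon>"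
    have wVW: "Inr w \<in> VW G P" using wc unfolding VW_def by auto
    obtain q c where qc: "q \<in> toset (Inr w)" "c \<in> toset (Inl (p j))" "dS G S (Inr w) (Inl (p j)) = gdist (cay_adj G S) q c"
      using dS_att[of "Inr w" "Inl (p j)" G S] TV[OF wVW] by auto
    have qC: "q \<in> carrier G" using qc TV[OF wVW] by auto
    have "dS G S (Inr w) u \<le> r + \<epsilon>" if uU: "u \<in> U" for u
    proof -
      have uVW: "u \<in> VW G P" using uU assms(9) by auto
      obtain a e where ae: "a \<in> toset (Inl q)" "e \<in> toset u" "dS G S (Inl q) u = gdist (cay_adj G S) a e"
        using dS_att[of "Inl q" u G S] TV[OF uVW] by auto
      have "dS G S (Inr w) u \<le> dS G S (Inl q) u" using dS_le[of q "Inr w" e u G S] qc ae by simp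
      also have "\<dots> \<le> gdist (cay_adj G S) q (p j) + dS G S (Inl (p j)) u"
        using dS_tri[OF cg qC pjc] TV[OF uVW] by auto
      finally show ?thesis using qc wd key[OF uU] by simp
    qed
    then show "Inr w \<in> ?H" unfolding r_hull_def using wc by auto
  qed
qed

end
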